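(* Let $\mathbf{X} \in \mathbb{R}^{n \times m}$ be a matrix with rows $\mathbf{x}_1^\top, \dots, \mathbf{x}_n^\top$ and let $\mathbf{y} = (y_1,\dots,y_n)^\top \in \mathbb{R}^n$. Assume $\mathbf{X}$ has full row rank, i.e. $\operatorname{rank}(\mathbf{X}) = n$. Let $\hat{\beta}^{\min\text{-}\ell_1}$ be a minimizer of $\|\beta\|_1$ subject to $\mathbf{X}\beta = \mathbf{y}$, and let $\hat{\beta}^{\min\text{-}\ell_2}$ be the minimizer of $\|\beta\|_2$ subject to $\mathbf{X}\beta = \mathbf{y}$. Then there exists $\bar{\delta} > 0$ such that: 1. $\hat{\beta}^{\min\text{-}\ell_1}$ minimizes $\beta \mapsto R_\infty^{\mathrm{adv}}(\beta; \delta)$ over $\mathbb{R}^m$ for all $0 < \delta < \bar{\delta}$; 2. $\hat{\beta}^{\min\text{-}\ell_2}$ minimizes $\beta \mapsto R_2^{\mathrm{adv}}(\beta; \delta)$ over $\mathbb{R}^m$ for all $0 < \delta < \bar{\delta}$.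
   Context: For $p \in [1,\infty]$ and $\delta \ge 0$, the empirical adversarial risk of a parameter $\beta \in \mathbb{R}^m$ on the data $\{(\mathbf{x}_i, y_i)\}_{i=1}^n \subset \mathbb{R}^m \times \mathbb{R}$ is $$R_p^{\mathrm{adv}}(\beta; \delta) = \frac{1}{n}\sum_{i=1}^n \max_{\|\Delta \mathbf{x}_i\|_p \le \delta} \big(y_i - (\mathbf{x}_i + \Delta\mathbf{x}_i)^\top \beta\big)^2,$$ where $\|\cdot\|_p$ is the $\ell_p$ norm on $\mathbb{R}^m$ (with $\|a\|_\infty = \max_i |a_i|$). *)

theory Defs
  imports "HOL-Analysis.Analysis"
begin

definition lp_norm :: "ereal \<Rightarrow> real^'m \<Rightarrow> real" where
  "lp_norm p a = (if p = \<infinity> then Max (range (\<lambda>i. \<bar>a $ i\<bar>))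
                  else (\<Sum>i\<in>UNIV. \<bar>a $ i\<bar> powr real_of_ereal p) powr (1 / real_of_ereal p))"

text \<open>Empirical adversarial risk. Rows of X (indexed by 'n) are the data points x_i.\<close>
definition adv_risk :: "ereal \<Rightarrow> real^'m^'n \<Rightarrow> real^'n \<Rightarrow> real^'m \<Rightarrow> real \<Rightarrow> real" where
  "adv_risk p X y \<beta> \<delta> =
     (1 / real CARD('n)) * (\<Sum>i\<in>UNIV. SUP d\<in>{d. lp_norm p d \<le> \<delta>}. (y $ i - (X $ i + d) \<bullet> \<beta>)\<^sup>2)"

end

theory Submission
  imports Defs
begin

lemma lp1: "lp_norm 1 v = (\<Sum>j\<in>UNIV. \<bar>v $ j\<bar>)"
  unfolding lp_norm_def by simp

lemma lp2: "lp_norm 2 (v::real^'m) = norm v"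
proof -
  have "(\<Sum>i\<in>UNIV. \<bar>v $ i\<bar> powr 2) = (\<Sum>i\<in>UNIV. (v $ i)\<^sup>2)"
    by (intro sum.cong refl) (simp add: powr_numeral)
  moreover have "real_of_ereal 2 = 2" by simp
  ultimately show ?thesis
    unfolding lp_norm_def norm_vec_def L2_set_def
    by (simp add: powr_half_sqrt sum_nonneg)
qed

lemma lp2': "lp_norm (ereal 2) (v::real^'m) = norm v"
  using lp2[of v] by simp

lemma lpinf_le: "lp_norm \<infinity> (v::real^'m) \<le> \<delta> \<longleftrightarrow> (\<forall>j. \<bar>v $ j\<bar> \<le> \<delta>)"
  unfolding lp_norm_def by (simp add: Max_le_iff)

lemma sup_inf:
  fixes x \<beta> :: "real^'m" and r \<delta> :: real
  assumes "0 \<le> \<delta>"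
  shows "(SUP d\<in>{d. lp_norm \<infinity> d \<le> \<delta>}. (r - (x + d) \<bullet> \<beta>)\<^sup>2) = (\<bar>r - x \<bullet> \<beta>\<bar> + \<delta> * lp_norm 1 \<beta>)\<^sup>2"
proof -
  define c where "c = r - x \<bullet> \<beta>"
  define s :: real where "s = (if c \<ge> 0 then 1 else -1)"
  define w :: "real^'m" where "w = (\<chi> j. - s * \<delta> * sgn (\<beta> $ j))"
  have eq: "r - (x + d) \<bullet> \<beta> = c - d \<bullet> \<beta>" for d
    by (simp add: c_def inner_add_left)
  have bnd: "(c - d \<bullet> \<beta>)\<^sup>2 \<le> (\<bar>c\<bar> + \<delta> * lp_norm 1 \<beta>)\<^sup>2" if "lp_norm \<infinity> d \<le> \<delta>" for d
  proof -
    have "\<bar>d \<bullet> \<beta>\<bar> \<le> (\<Sum>j\<in>UNIV. \<bar>d $ j * \<beta> $ j\<bar>)"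
      unfolding inner_vec_def by (simp add: sum_abs)
    also have "\<dots> \<le> (\<Sum>j\<in>UNIV. \<delta> * \<bar>\<beta> $ j\<bar>)"
      using that unfolding lpinf_le
      by (intro sum_mono) (simp add: abs_mult mult_right_mono)
    finally have "\<bar>d \<bullet> \<beta>\<bar> \<le> \<delta> * lp_norm 1 \<beta>" by (simp add: lp1 sum_distrib_left)
    hence "\<bar>c - d \<bullet> \<beta>\<bar> \<le> \<bar>c\<bar> + \<delta> * lp_norm 1 \<beta>" by linarith
    thus ?thesis by (metis abs_ge_zero power2_abs power_mono)
  qed
  have wn: "lp_norm \<infinity> w \<le> \<delta>"
    unfolding lpinf_le w_def using assms by (simp add: s_def abs_mult abs_sgn_eq)
  have "w \<bullet> \<beta> = - s * \<delta> * (\<Sum>j\<in>UNIV. sgn (\<beta> $ j) * \<beta> $ j)"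
    unfolding w_def inner_vec_def by (simp add: sum_distrib_left mult.assoc)
  also have "\<dots> = - s * \<delta> * lp_norm 1 \<beta>"
    by (simp add: lp1 sgn_mult_self_eq abs_sgn mult.commute)
  finally have wv: "(c - w \<bullet> \<beta>)\<^sup>2 = (\<bar>c\<bar> + \<delta> * lp_norm 1 \<beta>)\<^sup>2"
    by (simp add: s_def power2_eq_square algebra_simps)
  show ?thesis unfolding eq c_def[symmetric]
    apply (rule cSup_eq_maximum)
    using wn wv bnd by force+
qed

lemma sup_two:
  fixes x \<beta> :: "real^'m" and r \<delta> :: real
  assumes "0 \<le> \<delta>"
  shows "(SUP d\<in>{d. lp_norm 2 d \<le> \<delta>}. (r - (x + d) \<bullet> \<beta>)\<^sup>2) = (\<bar>r - x \<bullet> \<beta>\<bar> + \<delta> * lp_norm 2 \<beta>)\<^sup>2"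
proof -
  define c where "c = r - x \<bullet> \<beta>"
  define s :: real where "s = (if c \<ge> 0 then 1 else -1)"
  define w :: "real^'m" where "w = (- s * \<delta> / norm \<beta>) *\<^sub>R \<beta>"
  have eq: "r - (x + d) \<bullet> \<beta> = c - d \<bullet> \<beta>" for d
    by (simp add: c_def inner_add_left)
  have bnd: "(c - d \<bullet> \<beta>)\<^sup>2 \<le> (\<bar>c\<bar> + \<delta> * lp_norm 2 \<beta>)\<^sup>2" if "lp_norm 2 d \<le> \<delta>" for d
  proof -
    have "\<bar>d \<bullet> \<beta>\<bar> \<le> norm d * norm \<beta>" by (rule Cauchy_Schwarz_ineq2)
    also have "\<dots> \<le> \<delta> * norm \<beta>" using that unfolding lp2 by (simp add: mult_right_mono)
    finally have "\<bar>d \<bullet> \<beta>\<bar> \<le> \<delta> * lp_norm 2 \<beta>" by (simp only: lp2)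
    hence "\<bar>c - d \<bullet> \<beta>\<bar> \<le> \<bar>c\<bar> + \<delta> * lp_norm 2 \<beta>" by linarith
    thus ?thesis by (metis abs_ge_zero power2_abs power_mono)
  qed
  have wn: "lp_norm 2 w \<le> \<delta>"
    unfolding lp2 w_def using assms by (cases "\<beta> = 0") (auto simp: s_def)
  have "w \<bullet> \<beta> = - s * \<delta> * norm \<beta>"
    unfolding w_def by (cases "\<beta> = 0") (auto simp: power2_norm_eq_inner[symmetric] power2_eq_square)
  then have wv: "(c - w \<bullet> \<beta>)\<^sup>2 = (\<bar>c\<bar> + \<delta> * lp_norm 2 \<beta>)\<^sup>2"
    by (simp add: lp2 lp2' s_def power2_eq_square algebra_simps)
  show ?thesis unfolding eq c_def[symmetric]
    apply (rule cSup_eq_maximum)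
    using wn wv bnd by force+
qed

lemma key:
  fixes s :: "'n::finite \<Rightarrow> real"
  assumes s: "\<And>i. s i \<ge> 0" and a: "a \<ge> 0" and nb: "0 \<le> Nb" "Nb \<le> a + C * sum s UNIV"
    and C: "C > 0" and d: "\<delta> > 0" "\<delta> * real CARD('n) * C \<le> 1"
  shows "(1 / real CARD('n)) * (\<Sum>i\<in>(UNIV::'n set). (0 + \<delta> * Nb)\<^sup>2) \<le> (1 / real CARD('n)) * (\<Sum>i\<in>UNIV. (s i + \<delta> * a)\<^sup>2)"
proof -
  define n where "n = real CARD('n::finite)"
  define S where "S = sum s UNIV"
  have n: "n > 0" by (simp add: n_def)
  have S: "S \<ge> 0" unfolding S_def using s by (simp add: sum_nonneg)
  have cs: "(\<Sum>i\<in>UNIV. s i + \<delta> * a)\<^sup>2 \<le> (\<Sum>i\<in>UNIV. (s i + \<delta> * a)\<^sup>2) * n"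
    unfolding n_def by (rule sum_squared_le_sum_of_squares)
  have sum1: "(\<Sum>i\<in>UNIV. s i + \<delta> * a) = S + n * \<delta> * a"
    by (simp add: S_def n_def sum.distrib)
  have dc: "\<delta> * C \<le> 1 / n"
    using d n by (simp add: n_def field_simps)
  have "\<delta> * C * S \<le> S / n"
    using mult_right_mono[OF dc S] by simp
  moreover have "\<delta> * Nb \<le> \<delta> * a + \<delta> * C * S"
    using mult_left_mono[OF nb(2), of \<delta>] d unfolding S_def by (simp add: algebra_simps)
  ultimately have "\<delta> * Nb \<le> S / n + \<delta> * a" by linarith
  hence "(\<delta> * Nb)\<^sup>2 \<le> (S / n + \<delta> * a)\<^sup>2"
    using nb d by (intro power_mono) auto
  also have "(S / n + \<delta> * a)\<^sup>2 = (S + n * \<delta> * a)\<^sup>2 / n ^ 2"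
    using n by (simp add: field_simps)
  also have "\<dots> \<le> (\<Sum>i\<in>UNIV. (s i + \<delta> * a)\<^sup>2) / n"
  proof -
    have "(S + n * \<delta> * a)\<^sup>2 / n ^ 2 \<le> ((\<Sum>i\<in>UNIV. (s i + \<delta> * a)\<^sup>2) * n) / n ^ 2"
      using cs unfolding sum1 by (intro divide_right_mono) auto
    also have "\<dots> = (\<Sum>i\<in>UNIV. (s i + \<delta> * a)\<^sup>2) / n"
      using n by (simp add: power2_eq_square)
    finally show ?thesis .
  qed
  finally show ?thesis using n by (simp add: n_def field_simps)
qed

lemma risk_inf:
  fixes X :: "real^'m^'n"
  assumes "0 \<le> \<delta>"
  shows "adv_risk \<infinity> X y \<beta> \<delta> = (1 / real CARD('n)) * (\<Sum>i\<in>UNIV. (\<bar>y $ i - X $ i \<bullet> \<beta>\<bar> + \<delta> * lp_norm 1 \<beta>)\<^sup>2)"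
  unfolding adv_risk_def by (subst sup_inf[OF assms]) (rule refl)

lemma risk_two:
  fixes X :: "real^'m^'n"
  assumes "0 \<le> \<delta>"
  shows "adv_risk 2 X y \<beta> \<delta> = (1 / real CARD('n)) * (\<Sum>i\<in>UNIV. (\<bar>y $ i - X $ i \<bullet> \<beta>\<bar> + \<delta> * lp_norm 2 \<beta>)\<^sup>2)"
  unfolding adv_risk_def by (subst sup_two[OF assms]) (rule refl)

lemma l1_tri: "lp_norm 1 (a + b) \<le> lp_norm 1 a + lp_norm 1 (b::real^'m)"
  unfolding lp1 by (simp add: sum.distrib[symmetric] sum_mono abs_triangle_ineq)

lemma l1_norm: "lp_norm 1 (a::real^'m) \<le> real CARD('m) * norm a"
proof -
  have "lp_norm 1 a \<le> (\<Sum>j\<in>(UNIV::'m set). norm a)"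
    unfolding lp1 by (intro sum_mono component_le_norm_cart)
  thus ?thesis by simp
qed

theorem theorem2:
  fixes X :: "real^'m^'n" and y :: "real^'n" and b1 b2 :: "real^'m"
  assumes "rank X = CARD('n)"
    and "X *v b1 = y" and "\<forall>\<beta>. X *v \<beta> = y \<longrightarrow> lp_norm 1 b1 \<le> lp_norm 1 \<beta>"
    and "X *v b2 = y" and "\<forall>\<beta>. X *v \<beta> = y \<longrightarrow> lp_norm 2 b2 \<le> lp_norm 2 \<beta>"
  shows "\<exists>\<delta>bar>0. \<forall>\<delta>. 0 < \<delta> \<and> \<delta> < \<delta>bar \<longrightarrow>
           (\<forall>\<beta>. adv_risk \<infinity> X y b1 \<delta> \<le> adv_risk \<infinity> X y \<beta> \<delta>) \<and>
           (\<forall>\<beta>. adv_risk 2 X y b2 \<delta> \<le> adv_risk 2 X y \<beta> \<delta>)"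
proof -
  have "surj ((*v) X)" using assms(1) full_rank_surjective by blast
  then obtain B :: "real^'n^'m" where XB: "X ** B = mat 1"
    using matrix_right_invertible_surjective by blast
  obtain K where K: "K > 0" "\<And>x. norm (B *v x) \<le> K * norm x"
    using linear_bounded_pos[OF matrix_vector_mul_linear[of B]] by blast
  define C1 where "C1 = real CARD('m) * K"
  have C1: "C1 > 0" using K by (simp add: C1_def)
  define db where "db = min (1 / (real CARD('n) * C1)) (1 / (real CARD('n) * K))"
  have db: "db > 0" using K C1 by (simp add: db_def)
  have comp: "(X *v v) $ i = X $ i \<bullet> v" for v i by (rule matrix_vector_mul_component)
  have corr: "X *v (\<beta> + B *v (y - X *v \<beta>)) = y" for \<beta>
    by (simp add: matrix_vector_right_distrib matrix_vector_mul_assoc XB)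
  have rbound: "norm (B *v (y - X *v \<beta>)) \<le> K * (\<Sum>i\<in>UNIV. \<bar>y $ i - X $ i \<bullet> \<beta>\<bar>)" for \<beta>
  proof -
    have "norm (B *v (y - X *v \<beta>)) \<le> K * norm (y - X *v \<beta>)" by (rule K(2))
    also have "\<dots> \<le> K * (\<Sum>i\<in>UNIV. \<bar>(y - X *v \<beta>) $ i\<bar>)"
      using K(1) norm_le_l1_cart[of "y - X *v \<beta>"] by (intro mult_left_mono) auto
    finally show ?thesis by (simp add: comp)
  qed
  have sn: "\<And>i. 0 \<le> \<bar>y $ i - X $ i \<bullet> \<beta>\<bar>" for \<beta> by simp
  show ?thesis
  proof (intro exI[of _ db] conjI db allI impI)
    fix \<delta> \<beta> assume d: "0 < \<delta> \<and> \<delta> < db"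
    have d1: "\<delta> * real CARD('n) * C1 \<le> 1"
    proof -
      have "\<delta> \<le> 1 / (real CARD('n) * C1)" using d by (simp add: db_def)
      thus ?thesis using C1 by (simp add: field_simps)
    qed
    have d2: "\<delta> * real CARD('n) * K \<le> 1"
    proof -
      have "\<delta> \<le> 1 / (real CARD('n) * K)" using d by (simp add: db_def)
      thus ?thesis using K by (simp add: field_simps)
    qed
    have r1: "(y $ i - X $ i \<bullet> b1) = 0" for i using assms(2) comp by force
    have r2: "(y $ i - X $ i \<bullet> b2) = 0" for i using assms(4) comp by force
    have nb1: "lp_norm 1 b1 \<le> lp_norm 1 \<beta> + C1 * (\<Sum>i\<in>UNIV. \<bar>y $ i - X $ i \<bullet> \<beta>\<bar>)"
    proof -
      have "lp_norm 1 b1 \<le> lp_norm 1 (\<beta> + B *v (y - X *v \<beta>))" using assms(3) corr by blast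
      also have "\<dots> \<le> lp_norm 1 \<beta> + lp_norm 1 (B *v (y - X *v \<beta>))" by (rule l1_tri)
      also have "\<dots> \<le> lp_norm 1 \<beta> + real CARD('m) * norm (B *v (y - X *v \<beta>))"
        using l1_norm by simp
      also have "\<dots> \<le> lp_norm 1 \<beta> + real CARD('m) * (K * (\<Sum>i\<in>UNIV. \<bar>y $ i - X $ i \<bullet> \<beta>\<bar>))"
        using rbound by (simp add: mult_left_mono)
      finally show ?thesis by (simp add: C1_def mult.assoc)
    qed
    have nb2: "lp_norm 2 b2 \<le> lp_norm 2 \<beta> + K * (\<Sum>i\<in>UNIV. \<bar>y $ i - X $ i \<bullet> \<beta>\<bar>)"
    proof -
      have "lp_norm 2 b2 \<le> lp_norm 2 (\<beta> + B *v (y - X *v \<beta>))" using assms(5) corr by blast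
      also have "\<dots> = norm (\<beta> + B *v (y - X *v \<beta>))" by (rule lp2)
      also have "\<dots> \<le> norm \<beta> + norm (B *v (y - X *v \<beta>))" by (rule norm_triangle_ineq)
      finally show ?thesis using rbound[of \<beta>] unfolding lp2 by linarith
    qed
    have l1p: "0 \<le> lp_norm 1 v" for v :: "real^'m" unfolding lp1 by (simp add: sum_nonneg)
    have "adv_risk \<infinity> X y b1 \<delta> = (1 / real CARD('n)) * (\<Sum>i\<in>(UNIV::'n set). (0 + \<delta> * lp_norm 1 b1)\<^sup>2)"
      using d by (simp add: risk_inf r1)
    also have "\<dots> \<le> (1 / real CARD('n)) * (\<Sum>i\<in>UNIV. (\<bar>y $ i - X $ i \<bullet> \<beta>\<bar> + \<delta> * lp_norm 1 \<beta>)\<^sup>2)"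
      by (rule key[OF sn l1p l1p nb1 C1]) (use d d1 in auto)
    also have "\<dots> = adv_risk \<infinity> X y \<beta> \<delta>" using d by (simp add: risk_inf)
    finally show "adv_risk \<infinity> X y b1 \<delta> \<le> adv_risk \<infinity> X y \<beta> \<delta>" .
    have "adv_risk 2 X y b2 \<delta> = (1 / real CARD('n)) * (\<Sum>i\<in>(UNIV::'n set). (0 + \<delta> * lp_norm 2 b2)\<^sup>2)"
      using d risk_two[of \<delta> X y b2] r2 by simp
    also have "\<dots> \<le> (1 / real CARD('n)) * (\<Sum>i\<in>UNIV. (\<bar>y $ i - X $ i \<bullet> \<beta>\<bar> + \<delta> * lp_norm 2 \<beta>)\<^sup>2)"
      by (rule key[OF sn _ _ nb2 K(1)]) (use d d2 in \<open>auto simp: lp2'\<close>)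
    also have "\<dots> = adv_risk 2 X y \<beta> \<delta>" using d risk_two[of \<delta> X y \<beta>] by simp
    finally show "adv_risk 2 X y b2 \<delta> \<le> adv_risk 2 X y \<beta> \<delta>" .
  qed
qed

end
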